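(* In the Cross Model on $\mathbb{Z}_K$, for every configuration and all integers $K\ge1$, $n\ge0$, there exists a path of open edges from $(0,0)$ to $(n,0)$ of minimal length (among open paths in $\mathbb{Z}_K$) which uses only horizontal and diagonal edges, except possibly for vertical edges lying in the first column $\{0\}\times[\![-K,K]\!]$.
   Context: Cross Model: $\mathbb{Z}_K=\mathbb{Z}\times[\![-K,K]\!]$ with vertical edges $(i,j)\to(i,j+1)$, horizontal edges $(i,j)\to(i+1,j)$ and diagonal edges $(i,j)\to(i+1,j\pm1)$ (within the strip). Vertical and horizontal edges have length $1$, diagonal edges length $2$. All vertical and diagonal edges are open; each horizontal edge is open or closed (randomly, open with probability $1-\varepsilon$ independently). The length of a path is the sum of the lengths of its edges. *)

theory Defs
  imports Main
begin

type_synonym vertex = "int \<times> int"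

text \<open>Configuration: \<omega> (i,j) says whether the horizontal edge (i,j)--(i+1,j) is open.\<close>
type_synonym config = "int \<times> int \<Rightarrow> bool"

definition in_strip :: "int \<Rightarrow> vertex \<Rightarrow> bool" where
  "in_strip K v \<longleftrightarrow> \<bar>snd v\<bar> \<le> K"

definition vertical_edge :: "vertex \<Rightarrow> vertex \<Rightarrow> bool" where
  "vertical_edge u v \<longleftrightarrow> fst u = fst v \<and> \<bar>snd u - snd v\<bar> = 1"

definition horizontal_edge :: "vertex \<Rightarrow> vertex \<Rightarrow> bool" where
  "horizontal_edge u v \<longleftrightarrow> snd u = snd v \<and> \<bar>fst u - fst v\<bar> = 1"

definition diagonal_edge :: "vertex \<Rightarrow> vertex \<Rightarrow> bool" where
  "diagonal_edge u v \<longleftrightarrow> \<bar>fst u - fst v\<bar> = 1 \<and> \<bar>snd u - snd v\<bar> = 1"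

definition open_step :: "int \<Rightarrow> config \<Rightarrow> vertex \<Rightarrow> vertex \<Rightarrow> bool" where
  "open_step K \<omega> u v \<longleftrightarrow> in_strip K u \<and> in_strip K v \<and>
     (vertical_edge u v \<or> diagonal_edge u v \<or>
      (horizontal_edge u v \<and> \<omega> (min (fst u) (fst v), snd u)))"

definition edge_length :: "vertex \<Rightarrow> vertex \<Rightarrow> nat" where
  "edge_length u v = (if diagonal_edge u v then 2 else 1)"

definition open_path :: "int \<Rightarrow> config \<Rightarrow> vertex \<Rightarrow> vertex \<Rightarrow> vertex list \<Rightarrow> bool" where
  "open_path K \<omega> a b p \<longleftrightarrow> p \<noteq> [] \<and> hd p = a \<and> last p = b \<and>
     (\<forall>i < length p - 1. open_step K \<omega> (p ! i) (p ! Suc i))"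

definition path_length :: "vertex list \<Rightarrow> nat" where
  "path_length p = (\<Sum>i < length p - 1. edge_length (p ! i) (p ! Suc i))"

end

theory Submission
  imports Defs
begin

fun g :: "int \<Rightarrow> config \<Rightarrow> nat \<Rightarrow> int \<Rightarrow> int" where
  "g K \<omega> 0 j = \<bar>j\<bar>"
| "g K \<omega> (Suc m) j = Min ((if \<bar>j-1\<bar> \<le> K then {g K \<omega> m (j-1) + 2} else {}) \<union>
      (if \<bar>j+1\<bar> \<le> K then {g K \<omega> m (j+1) + 2} else {}) \<union>
      (if \<bar>j\<bar> \<le> K \<and> \<omega> (int m, j) then {g K \<omega> m j + 1} else {}))"

lemma g_le_diag:
  assumes "\<bar>j'\<bar> \<le> K" "\<bar>j-j'\<bar> = 1"
  shows "g K \<omega> (Suc m) j \<le> g K \<omega> m j' + 2"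
proof -
  have "j' = j - 1 \<or> j' = j + 1" using assms(2) by arith
  then show ?thesis using assms
    by (auto intro!: Min_le)
qed

lemma g_le_hor:
  assumes "\<bar>j\<bar> \<le> K" "\<omega> (int m, j)"
  shows "g K \<omega> (Suc m) j \<le> g K \<omega> m j + 1"
  using assms by (auto intro!: Min_le)

lemma g_cases:
  assumes "\<bar>j\<bar> \<le> K" "K \<ge> 1"
  shows "\<exists>j' c. \<bar>j'\<bar> \<le> K \<and> \<bar>j-j'\<bar> \<le> 1 \<and> g K \<omega> (Suc m) j = g K \<omega> m j' + c \<and>
     ((c = 2 \<and> \<bar>j-j'\<bar> = 1) \<or> (c = 1 \<and> j' = j \<and> \<omega> (int m, j)))"
proof -
  define A where "A = ((if \<bar>j-1\<bar> \<le> K then {g K \<omega> m (j-1) + 2} else {}) \<union>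
      (if \<bar>j+1\<bar> \<le> K then {g K \<omega> m (j+1) + 2} else {}) \<union>
      (if \<bar>j\<bar> \<le> K \<and> \<omega> (int m, j) then {g K \<omega> m j + 1} else {}))"
  have fin: "finite A" unfolding A_def by auto
  have ne: "A \<noteq> {}" unfolding A_def using assms by auto
  have "Min A \<in> A" using Min_in[OF fin ne] .
  moreover have "g K \<omega> (Suc m) j = Min A" unfolding A_def by simp
  ultimately show ?thesis unfolding A_def
    by (auto split: if_splits intro: exI[of _ "j-1"] exI[of _ "j+1"] exI[of _ j])
qed

lemma g_lip:
  assumes "K \<ge> 1"
  shows "\<bar>j\<bar> \<le> K \<Longrightarrow> \<bar>j'\<bar> \<le> K \<Longrightarrow> \<bar>j-j'\<bar> \<le> 1 \<Longrightarrow> g K \<omega> m j' \<le> g K \<omega> m j + 1"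
proof (induction m arbitrary: j j')
  case 0
  then show ?case by simp
next
  case (Suc m)
  obtain i c where ic: "\<bar>i\<bar> \<le> K" "\<bar>j-i\<bar> \<le> 1" "g K \<omega> (Suc m) j = g K \<omega> m i + c"
     "(c = 2 \<and> \<bar>j-i\<bar> = 1) \<or> (c = 1 \<and> i = j \<and> \<omega> (int m, j))"
    using g_cases[OF Suc.prems(1) assms] by blast
  show ?case
  proof (cases "j' = j")
    case True then show ?thesis by simp
  next
    case False
    hence jj: "\<bar>j'-j\<bar> = 1" using Suc.prems by arith
    from ic(4) show ?thesis
    proof
      assume h: "c = 1 \<and> i = j \<and> \<omega> (int m, j)"
      have "g K \<omega> (Suc m) j' \<le> g K \<omega> m j + 2"
        using g_le_diag[OF Suc.prems(1), of j'] jj by (simp add: abs_minus_commute)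
      then show ?thesis using h ic(3) by simp
    next
      assume h: "c = 2 \<and> \<bar>j-i\<bar> = 1"
      show ?thesis
      proof (cases "i = j'")
        case True
        have "g K \<omega> m j \<le> g K \<omega> m j' + 1"
          using Suc.IH[of j' j] Suc.prems jj by (simp add: abs_minus_commute)
        moreover have "g K \<omega> (Suc m) j' \<le> g K \<omega> m j + 2"
          using g_le_diag[OF Suc.prems(1), of j'] jj by (simp add: abs_minus_commute)
        ultimately show ?thesis using h ic(3) True by simp
      next
        case False
        hence "i = 2*j - j'" using h jj by arith
        hence "\<bar>i - j\<bar> \<le> 1" using jj by arith
        have "g K \<omega> m j \<le> g K \<omega> m i + 1"
          using Suc.IH[of i j] Suc.prems ic by (simp add: abs_minus_commute)
        moreover have "g K \<omega> (Suc m) j' \<le> g K \<omega> m j + 2"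
          using g_le_diag[OF Suc.prems(1), of j'] jj by (simp add: abs_minus_commute)
        ultimately show ?thesis using h ic(3) by simp
      qed
    qed
  qed
qed

lemma g_lip2:
  assumes "K \<ge> 1" "\<bar>j\<bar> \<le> K" "\<bar>j'\<bar> \<le> K" "\<bar>j-j'\<bar> \<le> 2"
  shows "g K \<omega> m j' \<le> g K \<omega> m j + 2"
proof (cases "\<bar>j-j'\<bar> \<le> 1")
  case True
  have "g K \<omega> m j' \<le> g K \<omega> m j + 1" using g_lip[OF assms(1) assms(2,3)] True by blast
  then show ?thesis by simp
next
  case False
  define h where "h = (j + j') div 2"
  have "\<bar>h\<bar> \<le> K" "\<bar>j-h\<bar> \<le> 1" "\<bar>h-j'\<bar> \<le> 1" using False assms unfolding h_def by arith+
  then have "g K \<omega> m h \<le> g K \<omega> m j + 1" "g K \<omega> m j' \<le> g K \<omega> m h + 1"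
    using g_lip[OF assms(1)] assms by blast+
  then show ?thesis by simp
qed

lemma g_back:
  assumes "K \<ge> 1" "\<bar>b\<bar> \<le> K" "\<bar>d\<bar> \<le> K" "\<bar>b-d\<bar> \<le> 1"
  shows "g K \<omega> m d \<le> g K \<omega> (Suc m) b + 1"
proof -
  obtain i c where ic: "\<bar>i\<bar> \<le> K" "\<bar>b-i\<bar> \<le> 1" "g K \<omega> (Suc m) b = g K \<omega> m i + c"
     "(c = 2 \<and> \<bar>b-i\<bar> = 1) \<or> (c = 1 \<and> i = b \<and> \<omega> (int m, b))"
    using g_cases[OF assms(2,1)] by blast
  have "\<bar>i-d\<bar> \<le> 2" using ic(2) assms(4) by arith
  then have "g K \<omega> m d \<le> g K \<omega> m i + 2" using g_lip2[OF assms(1) ic(1) assms(3)] by blast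
  then show ?thesis using ic by auto
qed

definition F :: "int \<Rightarrow> config \<Rightarrow> vertex \<Rightarrow> int" where
  "F K \<omega> v = (if fst v \<le> 0 then \<bar>fst v\<bar> + \<bar>snd v\<bar> else g K \<omega> (nat (fst v)) (snd v))"

lemma F_nonneg: "a \<ge> 0 \<Longrightarrow> F K \<omega> (a, b) = g K \<omega> (nat a) b"
  unfolding F_def by auto

lemma F_step:
  assumes K: "K \<ge> 1" and st: "open_step K \<omega> (a,b) (c,d)"
  shows "F K \<omega> (c,d) \<le> F K \<omega> (a,b) + int (edge_length (a,b) (c,d))"
proof -
  have sb: "\<bar>b\<bar> \<le> K" "\<bar>d\<bar> \<le> K" using st unfolding open_step_def in_strip_def by auto
  have e: "(a = c \<and> \<bar>b-d\<bar> = 1 \<and> edge_length (a,b) (c,d) = 1) \<or>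
       (\<bar>a-c\<bar> = 1 \<and> \<bar>b-d\<bar> = 1 \<and> edge_length (a,b) (c,d) = 2) \<or>
       (b = d \<and> \<bar>a-c\<bar> = 1 \<and> \<omega> (min a c, b) \<and> edge_length (a,b) (c,d) = 1)"
    using st unfolding open_step_def vertical_edge_def diagonal_edge_def horizontal_edge_def edge_length_def
    by auto
  show ?thesis
  proof (cases "a \<le> 0 \<and> c \<le> 0")
    case True
    then show ?thesis using e unfolding F_def by auto
  next
    case False
    consider (same) "a = c" "a > 0" | (fw) "c = a + 1" "a \<ge> 0" | (bw) "a = c + 1" "c \<ge> 0"
      using e False by arith
    then show ?thesis
    proof cases
      case same
      then have "b = d + 1 \<or> d = b + 1" "edge_length (a,b) (c,d) = 1" using e by auto
      then show ?thesis using same g_lip[OF K, of b d \<omega> "nat a"] sb F_nonneg[of a] F_nonneg[of c]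
        by auto
    next
      case fw
      have nc: "nat c = Suc (nat a)" using fw by simp
      from e fw show ?thesis
      proof (elim disjE)
        assume h: "\<bar>a-c\<bar> = 1 \<and> \<bar>b-d\<bar> = 1 \<and> edge_length (a,b) (c,d) = 2"
        then show ?thesis using g_le_diag[of b K d \<omega> "nat a"] sb F_nonneg[of a] F_nonneg[of c] fw nc
          by (simp add: abs_minus_commute)
      next
        assume h: "b = d \<and> \<bar>a-c\<bar> = 1 \<and> \<omega> (min a c, b) \<and> edge_length (a,b) (c,d) = 1"
        then have "\<omega> (int (nat a), d)" using fw by auto
        then have "g K \<omega> (Suc (nat a)) d \<le> g K \<omega> (nat a) d + 1" using g_le_hor sb by blast
        moreover have "F K \<omega> (c,d) = g K \<omega> (Suc (nat a)) d" using F_nonneg[of c K \<omega> d] fw nc by simp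
        moreover have "F K \<omega> (a,b) = g K \<omega> (nat a) d" using F_nonneg[of a K \<omega> b] fw h by simp
        moreover have "edge_length (a,b) (c,d) = 1" using h by auto
        ultimately show ?thesis using h by (simp del: g.simps)
      qed auto
    next
      case bw
      have na: "nat a = Suc (nat c)" using bw by simp
      have "\<bar>b-d\<bar> \<le> 1" using e bw by auto
      then have "g K \<omega> (nat c) d \<le> g K \<omega> (Suc (nat c)) b + 1" using g_back[OF K sb] by blast
      then have "g K \<omega> (nat c) d \<le> g K \<omega> (nat a) b + 1" by (simp only: na)
      moreover have "edge_length (a,b) (c,d) \<ge> 1" unfolding edge_length_def by auto
      ultimately show ?thesis using F_nonneg[of a K \<omega> b] F_nonneg[of c K \<omega> d] bw by (simp del: g.simps)
    qed
  qed
qed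

fun plen :: "vertex list \<Rightarrow> nat" where
  "plen (x#y#r) = edge_length x y + plen (y#r)"
| "plen _ = 0"

fun chain :: "(vertex \<Rightarrow> vertex \<Rightarrow> bool) \<Rightarrow> vertex list \<Rightarrow> bool" where
  "chain P (x#y#r) = (P x y \<and> chain P (y#r))"
| "chain P _ = True"

lemma plen_eq: "path_length p = plen p"
proof (induction p rule: plen.induct)
  case (1 x y r)
  have "path_length (x#y#r) = (\<Sum>i<Suc (length r). edge_length ((x#y#r) ! i) ((x#y#r) ! Suc i))"
    unfolding path_length_def by simp
  also have "\<dots> = edge_length x y + (\<Sum>i<length r. edge_length ((y#r) ! i) ((y#r) ! Suc i))"
    by (subst sum.lessThan_Suc_shift) simp
  also have "\<dots> = edge_length x y + path_length (y#r)" unfolding path_length_def by simp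
  finally show ?case using 1 by simp
qed (auto simp: path_length_def)

lemma chain_eq: "(\<forall>i < length p - 1. P (p ! i) (p ! Suc i)) = chain P p"
proof (induction P p rule: chain.induct)
  case (1 P x y r)
  have "(\<forall>i < length (x#y#r) - 1. P ((x#y#r) ! i) ((x#y#r) ! Suc i)) =
        (\<forall>i < Suc (length r). P ((x#y#r) ! i) ((x#y#r) ! Suc i))" by simp
  also have "\<dots> = (P x y \<and> (\<forall>i < length r. P ((y#r) ! i) ((y#r) ! Suc i)))"
    by (subst All_less_Suc2) simp
  finally show ?case using 1 by simp
qed auto

lemma chain_snoc: "chain P (p @ [x]) = (chain P p \<and> (p \<noteq> [] \<longrightarrow> P (last p) x))"
  by (induction P p rule: chain.induct) auto

lemma plen_snoc: "plen (p @ [x]) = plen p + (if p = [] then 0 else edge_length (last p) x)"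
  by (induction p rule: plen.induct) auto

lemma F_path: "K \<ge> 1 \<Longrightarrow> chain (open_step K \<omega>) p \<Longrightarrow> p \<noteq> [] \<Longrightarrow>
   F K \<omega> (last p) \<le> F K \<omega> (hd p) + int (plen p)"
proof (induction p rule: plen.induct)
  case (1 x y r)
  have "F K \<omega> y \<le> F K \<omega> x + int (edge_length x y)"
    using F_step[OF 1(2)] 1(3) by (cases x; cases y) auto
  then show ?case using 1 by simp
qed auto


definition VC :: "vertex \<Rightarrow> vertex \<Rightarrow> bool" where
  "VC u v \<longleftrightarrow> (vertical_edge u v \<longrightarrow> fst u = 0 \<and> fst v = 0)"

lemma col:
  assumes "s = 1 \<or> s = -1"
  shows "int k \<le> K \<Longrightarrow> \<exists>p. p \<noteq> [] \<and> hd p = (0,0) \<and> last p = (0, s * int k) \<and>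
     chain (open_step K \<omega>) p \<and> plen p = k \<and> chain VC p"
proof (induction k)
  case 0
  then show ?case by (intro exI[of _ "[(0,0)]"]) auto
next
  case (Suc k)
  then obtain p where p: "p \<noteq> []" "hd p = (0,0)" "last p = (0, s * int k)"
     "chain (open_step K \<omega>) p" "plen p = k" "chain VC p" by auto
  let ?x = "(0::int, s * int (Suc k))"
  have st: "open_step K \<omega> (0, s * int k) ?x"
    using Suc.prems assms unfolding open_step_def in_strip_def vertical_edge_def by auto
  have el: "edge_length (0, s * int k) ?x = 1"
    using assms unfolding edge_length_def diagonal_edge_def by auto
  have vc: "VC (0, s * int k) ?x" unfolding VC_def by simp
  show ?case
    apply (rule exI[of _ "p @ [?x]"])
    using p st el vc by (simp add: chain_snoc plen_snoc)
qed

lemma construct: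
  assumes K: "K \<ge> 1"
  shows "\<bar>j\<bar> \<le> K \<Longrightarrow> \<exists>p. p \<noteq> [] \<and> hd p = (0,0) \<and> last p = (int m, j) \<and>
     chain (open_step K \<omega>) p \<and> int (plen p) = g K \<omega> m j \<and> chain VC p"
proof (induction m arbitrary: j)
  case 0
  define s :: int where "s = (if j \<ge> 0 then 1 else -1)"
  have "s = 1 \<or> s = -1" unfolding s_def by auto
  moreover have "int (nat \<bar>j\<bar>) \<le> K" using 0 by simp
  ultimately obtain p where p: "p \<noteq> []" "hd p = (0,0)" "last p = (0, s * int (nat \<bar>j\<bar>))"
     "chain (open_step K \<omega>) p" "plen p = nat \<bar>j\<bar>" "chain VC p" using col by blast
  have "s * int (nat \<bar>j\<bar>) = j" unfolding s_def by auto
  then show ?case using p by (intro exI[of _ p]) simp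
next
  case (Suc m)
  obtain i c where ic: "\<bar>i\<bar> \<le> K" "\<bar>j-i\<bar> \<le> 1" "g K \<omega> (Suc m) j = g K \<omega> m i + c"
     "(c = 2 \<and> \<bar>j-i\<bar> = 1) \<or> (c = 1 \<and> i = j \<and> \<omega> (int m, j))"
    using g_cases[OF Suc.prems K] by blast
  obtain p where p: "p \<noteq> []" "hd p = (0,0)" "last p = (int m, i)"
     "chain (open_step K \<omega>) p" "int (plen p) = g K \<omega> m i" "chain VC p"
    using Suc.IH[OF ic(1)] by blast
  let ?x = "(int (Suc m), j)"
  have st: "open_step K \<omega> (int m, i) ?x"
    using ic Suc.prems unfolding open_step_def in_strip_def diagonal_edge_def horizontal_edge_def by auto
  have el: "int (edge_length (int m, i) ?x) = c"
    using ic unfolding edge_length_def diagonal_edge_def by auto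
  have vc: "VC (int m, i) ?x" unfolding VC_def vertical_edge_def by simp
  show ?case
    apply (rule exI[of _ "p @ [?x]"])
    using p st el vc ic(3) by (simp add: chain_snoc plen_snoc del: g.simps)
qed

theorem lemma3:
  fixes K n :: int and \<omega> :: config
  assumes "K \<ge> 1" and "n \<ge> 0"
  shows "\<exists>p. open_path K \<omega> (0, 0) (n, 0) p \<and>
           (\<forall>q. open_path K \<omega> (0, 0) (n, 0) q \<longrightarrow> path_length p \<le> path_length q) \<and>
           (\<forall>i < length p - 1. vertical_edge (p ! i) (p ! Suc i) \<longrightarrow>
               fst (p ! i) = 0 \<and> fst (p ! Suc i) = 0)"
proof -
  obtain p where p: "p \<noteq> []" "hd p = (0,0)" "last p = (int (nat n), 0)"
     "chain (open_step K \<omega>) p" "int (plen p) = g K \<omega> (nat n) 0" "chain VC p"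
    using construct[OF assms(1), of 0 "nat n" \<omega>] assms by auto
  have nn: "int (nat n) = n" using assms by simp
  show ?thesis
  proof (intro exI[of _ p] conjI allI impI)
    show "open_path K \<omega> (0, 0) (n, 0) p"
      unfolding open_path_def chain_eq using p nn by simp
  next
    fix q assume q: "open_path K \<omega> (0, 0) (n, 0) q"
    hence "q \<noteq> []" "hd q = (0,0)" "last q = (n,0)" "chain (open_step K \<omega>) q"
      unfolding open_path_def chain_eq by auto
    hence "F K \<omega> (n,0) \<le> F K \<omega> (0,0) + int (plen q)" using F_path[OF assms(1)] by metis
    moreover have "F K \<omega> (n,0) = g K \<omega> (nat n) 0" using F_nonneg assms(2) by blast
    moreover have "F K \<omega> (0,0) = 0" unfolding F_def by simp
    ultimately show "path_length p \<le> path_length q" using p(5) unfolding plen_eq by linarith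
  next
    fix i assume "i < length p - 1" "vertical_edge (p ! i) (p ! Suc i)"
    moreover have "\<forall>i < length p - 1. VC (p ! i) (p ! Suc i)" using p(6) chain_eq by blast
    ultimately show "fst (p ! i) = 0" "fst (p ! Suc i) = 0" unfolding VC_def by auto
  qed
qed

end
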